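(* Fix $d\ge1$. There is a constant $C$ depending only on $d$ such that for all $n$, the number of $d$-element subsets $J\subset\mathbb{Z}_n$ which generate $\mathbb{Z}_n$ and are exceptional is at most $Cn^{d-1}$.
   Context: Let $\omega=e^{2\pi i/n}$. For a $d$-element subset $J\subset\mathbb{Z}_n$, the cyclic harmonic frame $\Phi_J$ is the sequence $(v_k)_{k\in\mathbb{Z}_n}$ with $v_k=(\omega^{jk})_{j\in J}\in\mathbb{C}^J\cong\mathbb{C}^d$; it has $n$ distinct vectors iff $J$ generates $\mathbb{Z}_n$. Two finite sequences $(v_k)_{k\in I}$, $(w_k)_{k\in I'}$ in $\mathbb{C}^d$ are unitarily equivalent if there is a unitary $U$ and a bijection $\sigma:I\to I'$ with $v_k=Uw_{\sigma(k)}$ for all $k$. Two $d$-element subsets $J,K\subset\mathbb{Z}_n$ are multiplicatively equivalent if $K=aJ$ for some $a\in\mathbb{Z}_n^*$. A $d$-element subset $J$ is exceptional if there is a $d$-element subset $K\subset\mathbb{Z}_n$, not multiplicatively equivalent to $J$, with $\Phi_J$ and $\Phi_K$ unitarily equivalent. *)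

theory Defs
  imports Complex_Main "HOL-Computational_Algebra.Primes"
begin

text \<open>Z_n is modelled as {0..<n} with arithmetic mod n.\<close>

definition omega :: "nat \<Rightarrow> complex" where
  "omega n = exp (2 * pi * \<i> / of_nat n)"

text \<open>The k-th vector of the cyclic harmonic frame Phi_J, as a function on the index set J
  (coordinates outside J are irrelevant).\<close>
definition harm_vec :: "nat \<Rightarrow> nat set \<Rightarrow> nat \<Rightarrow> nat \<Rightarrow> complex" where
  "harm_vec n J k = (\<lambda>j. omega n ^ (j * k))"

definition generates_Zn :: "nat \<Rightarrow> nat set \<Rightarrow> bool" where
  "generates_Zn n J \<longleftrightarrow>
     (\<forall>H. H \<subseteq> {..<n} \<and> 0 \<in> H \<and> (\<forall>a\<in>H. \<forall>b\<in>H. (a + b) mod n \<in> H)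
          \<and> (\<forall>a\<in>H. (n - a) mod n \<in> H) \<and> J \<subseteq> H \<longrightarrow> H = {..<n})"

definition unitary_mat :: "nat set \<Rightarrow> nat set \<Rightarrow> (nat \<Rightarrow> nat \<Rightarrow> complex) \<Rightarrow> bool" where
  "unitary_mat J K u \<longleftrightarrow>
     (\<forall>k\<in>K. \<forall>k'\<in>K. (\<Sum>j\<in>J. cnj (u j k) * u j k') = (if k = k' then 1 else 0)) \<and>
     (\<forall>j\<in>J. \<forall>j'\<in>J. (\<Sum>k\<in>K. u j k * cnj (u j' k)) = (if j = j' then 1 else 0))"

definition unit_equiv_frames :: "nat \<Rightarrow> nat set \<Rightarrow> nat set \<Rightarrow> bool" where
  "unit_equiv_frames n J K \<longleftrightarrow>
     (\<exists>u \<sigma>. unitary_mat J K u \<and> bij_betw \<sigma> {..<n} {..<n} \<and>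
        (\<forall>k<n. \<forall>j\<in>J. harm_vec n J k j = (\<Sum>i\<in>K. u j i * harm_vec n K (\<sigma> k) i)))"

definition mult_equiv :: "nat \<Rightarrow> nat set \<Rightarrow> nat set \<Rightarrow> bool" where
  "mult_equiv n J K \<longleftrightarrow> (\<exists>a<n. coprime a n \<and> K = (\<lambda>j. (a * j) mod n) ` J)"

definition exceptional :: "nat \<Rightarrow> nat \<Rightarrow> nat set \<Rightarrow> bool" where
  "exceptional n d J \<longleftrightarrow>
     (\<exists>K. K \<subseteq> {..<n} \<and> card K = d \<and> \<not> mult_equiv n J K \<and> unit_equiv_frames n J K)"

end

theory Submission
  imports Defs "HOL-Number_Theory.Number_Theory"
begin


lemma omega_cis: "omega n = cis (2 * pi / real n)"
  unfolding omega_def by (simp add: cis_conv_exp mult_ac)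

lemma omega_pow: "omega n ^ k = cis (2 * pi * real k / real n)"
  unfolding omega_cis by (simp add: DeMoivre mult_ac)

lemma omega_norm [simp]: "norm (omega n ^ k) = 1"
  unfolding omega_pow by simp

lemma omega_nz [simp]: "omega n ^ k \<noteq> 0"
proof
  assume h: "omega n ^ k = 0"
  have "norm (omega n ^ k) = 1" by (rule omega_norm)
  then show False unfolding h by simp
qed

lemma omega_n: "n > 0 \<Longrightarrow> omega n ^ n = 1"
  unfolding omega_pow by (simp add: complex_eq_iff)

lemma omega_pow_mod: assumes "n > 0" shows "omega n ^ k = omega n ^ (k mod n)"
proof -
  have "omega n ^ k = omega n ^ (n * (k div n) + k mod n)" by simp
  also have "\<dots> = (omega n ^ n) ^ (k div n) * omega n ^ (k mod n)"
    by (simp only: power_add power_mult)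
  finally have "omega n ^ k = (omega n ^ n) ^ (k div n) * omega n ^ (k mod n)" .
  thus ?thesis using omega_n[OF assms] by simp
qed

lemma omega_inj_lt: assumes "n > 0" "a < n" "b < n" "omega n ^ a = omega n ^ b" shows "a = b"
proof -
  have "inj_on (\<lambda>k. cis (2 * pi * real k / real n)) {..<n}"
    using bij_betw_roots_unity[OF assms(1)] by (simp add: bij_betw_def)
  thus ?thesis using assms unfolding omega_pow inj_on_def by auto
qed

lemma omega_eq_iff: assumes "n > 0" shows "omega n ^ a = omega n ^ b \<longleftrightarrow> a mod n = b mod n"
  using omega_inj_lt[OF assms, of "a mod n" "b mod n"] omega_pow_mod[OF assms, of a]
    omega_pow_mod[OF assms, of b] assms by auto

lemma omega_cnj1: "cnj (omega n) = inverse (omega n)"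
proof -
  have "cnj z = inverse z" if "norm z = 1" for z :: complex
  proof -
    have "z * cnj z = 1" using complex_norm_square[of z] that by simp
    then show ?thesis by (simp add: inverse_unique)
  qed
  moreover have "norm (omega n) = 1" using omega_norm[of n 1] by simp
  ultimately show ?thesis by simp
qed

lemma omega_cnj: "cnj (omega n ^ k) = inverse (omega n ^ k)"
  by (simp add: omega_cnj1 power_inverse)

lemma omega_sum: assumes "n > 0"
  shows "(\<Sum>k<n. omega n ^ (x * k) * cnj (omega n ^ (y * k))) = (if x mod n = y mod n then of_nat n else 0)"
proof -
  define r where "r = omega n ^ x / omega n ^ y"
  have eq: "omega n ^ (x * k) * cnj (omega n ^ (y * k)) = r ^ k" for k
    unfolding omega_cnj r_def by (simp add: power_mult power_divide divide_inverse power_mult_distrib power_inverse)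
  have rn: "r ^ n = 1"
  proof -
    have a: "(omega n ^ x) ^ n = (omega n ^ n) ^ x" for x by (metis power_mult mult.commute)
    have "r ^ n = (omega n ^ n) ^ x / (omega n ^ n) ^ y"
      unfolding r_def power_divide a ..
    thus ?thesis using omega_n[OF assms] by simp
  qed
  show ?thesis
  proof (cases "x mod n = y mod n")
    case True
    then have "r = 1" using omega_eq_iff[OF assms, of x y] omega_nz[of n y] unfolding r_def by simp
    then show ?thesis using True eq by simp
  next
    case False
    then have "r \<noteq> 1" using omega_eq_iff[OF assms, of x y] omega_nz[of n y] unfolding r_def by simp
    have "(\<Sum>k<n. omega n ^ (x * k) * cnj (omega n ^ (y * k))) = (\<Sum>k<n. r ^ k)"
      using eq by simp
    also have "\<dots> = 0" unfolding geometric_sum[OF \<open>r \<noteq> 1\<close>] rn by simp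
    finally show ?thesis using False by simp
  qed
qed



definition sidon :: "nat \<Rightarrow> nat set \<Rightarrow> bool" where
  "sidon n J \<longleftrightarrow> (\<forall>x\<in>J. \<forall>y\<in>J. \<forall>z\<in>J. \<forall>w\<in>J. (x + y) mod n = (z + w) mod n \<longrightarrow>
      (x = z \<and> y = w) \<or> (x = w \<and> y = z))"

lemma term_id: "c j * omega n ^ (j * k) * cnj (c j' * omega n ^ (j' * k)) * (omega n ^ (j1 * k) * cnj (omega n ^ (j0 * k)))
   = c j * cnj (c j') * (omega n ^ ((j + j1) * k) * cnj (omega n ^ ((j' + j0) * k)))"
  by (simp add: add_mult_distrib power_add)

lemma swap3: "(\<Sum>k\<in>A. \<Sum>j\<in>B. \<Sum>j'\<in>C. a j j' * (f j j' k :: complex))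
   = (\<Sum>j\<in>B. \<Sum>j'\<in>C. a j j' * (\<Sum>k\<in>A. f j j' k))"
proof -
  have "(\<Sum>k\<in>A. \<Sum>j\<in>B. \<Sum>j'\<in>C. a j j' * f j j' k) = (\<Sum>j\<in>B. \<Sum>k\<in>A. \<Sum>j'\<in>C. a j j' * f j j' k)"
    by (rule sum.swap)
  also have "\<dots> = (\<Sum>j\<in>B. \<Sum>j'\<in>C. \<Sum>k\<in>A. a j j' * f j j' k)"
    by (rule sum.cong[OF refl], rule sum.swap)
  also have "\<dots> = (\<Sum>j\<in>B. \<Sum>j'\<in>C. a j j' * (\<Sum>k\<in>A. f j j' k))"
    by (simp add: sum_distrib_left)
  finally show ?thesis .
qed

lemma fourier:
  assumes n: "n > 0" and fin: "finite J" and sub: "J \<subseteq> {..<n}" and sid: "sidon n J"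
    and nrm: "\<forall>k<n. norm (\<Sum>j\<in>J. c j * omega n ^ (j * k)) = 1"
    and j0: "j0 \<in> J" and j1: "j1 \<in> J" and ne: "j0 \<noteq> j1"
  shows "c j0 * cnj (c j1) = 0"
proof -
  define g where "g k = (\<Sum>j\<in>J. c j * omega n ^ (j * k))" for k
  define t where "t k = omega n ^ (j1 * k) * cnj (omega n ^ (j0 * k))" for k
  have "(\<Sum>k<n. g k * cnj (g k) * t k) = (\<Sum>k<n. t k)"
  proof (rule sum.cong[OF refl])
    fix k assume "k \<in> {..<n}"
    then have "norm (g k) = 1" using nrm by (simp add: g_def)
    then have "g k * cnj (g k) = 1" by (metis complex_norm_square mult.commute of_real_1 power_one complex_mult_cnj)
    then show "g k * cnj (g k) * t k = t k" by simp
  qed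
  also have "\<dots> = 0"
  proof -
    have "j0 < n" "j1 < n" using j0 j1 sub by auto
    then have "j1 mod n \<noteq> j0 mod n" using ne by simp
    then show ?thesis unfolding t_def using omega_sum[OF n, of j1 j0] by simp
  qed
  finally have lhs: "(\<Sum>k<n. g k * cnj (g k) * t k) = 0" .
  have "(\<Sum>k<n. g k * cnj (g k) * t k) = (\<Sum>k<n. \<Sum>j\<in>J. \<Sum>j'\<in>J.
      c j * cnj (c j') * (omega n ^ ((j + j1) * k) * cnj (omega n ^ ((j' + j0) * k))))"
  proof (rule sum.cong[OF refl])
    fix k
    have "g k * cnj (g k) * t k = (\<Sum>j\<in>J. \<Sum>j'\<in>J. c j * omega n ^ (j * k) * cnj (c j' * omega n ^ (j' * k)) * t k)"
    proof -
      have "g k * cnj (g k) = (\<Sum>j\<in>J. \<Sum>j'\<in>J. c j * omega n ^ (j * k) * cnj (c j' * omega n ^ (j' * k)))"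
        unfolding g_def cnj_sum by (rule sum_product)
      then show ?thesis by (simp add: sum_distrib_right)
    qed
    also have "\<dots> = (\<Sum>j\<in>J. \<Sum>j'\<in>J.
      c j * cnj (c j') * (omega n ^ ((j + j1) * k) * cnj (omega n ^ ((j' + j0) * k))))"
      unfolding t_def term_id ..
    finally show "g k * cnj (g k) * t k = \<dots>" .
  qed
  also have "\<dots> = (\<Sum>j\<in>J. \<Sum>j'\<in>J. c j * cnj (c j') *
       (\<Sum>k<n. omega n ^ ((j + j1) * k) * cnj (omega n ^ ((j' + j0) * k))))"
    by (rule swap3)
  also have "\<dots> = (\<Sum>j\<in>J. \<Sum>j'\<in>J. c j * cnj (c j') *
       (if j = j0 \<and> j' = j1 then of_nat n else 0))"
  proof (intro sum.cong refl)
    fix j j' assume jj: "j \<in> J" "j' \<in> J"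
    have "((j + j1) mod n = (j' + j0) mod n) \<longleftrightarrow> (j = j0 \<and> j' = j1)"
    proof
      assume "(j + j1) mod n = (j' + j0) mod n"
      then have "(j = j' \<and> j1 = j0) \<or> (j = j0 \<and> j1 = j')"
        using sid[unfolded sidon_def, rule_format, OF jj(1) j1 jj(2) j0] by simp
      then show "j = j0 \<and> j' = j1" using ne by auto
    next
      assume "j = j0 \<and> j' = j1"
      then show "(j + j1) mod n = (j' + j0) mod n" by (simp add: add.commute)
    qed
    then show "c j * cnj (c j') * (\<Sum>k<n. omega n ^ ((j + j1) * k) * cnj (omega n ^ ((j' + j0) * k)))
       = c j * cnj (c j') * (if j = j0 \<and> j' = j1 then of_nat n else 0)"
      using omega_sum[OF n, of "j + j1" "j' + j0"] by simp
  qed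
  also have "\<dots> = c j0 * cnj (c j1) * of_nat n"
  proof -
    have "(\<Sum>j\<in>J. \<Sum>j'\<in>J. c j * cnj (c j') * (if j = j0 \<and> j' = j1 then of_nat n else 0))
      = (\<Sum>j\<in>J. if j = j0 then (\<Sum>j'\<in>J. if j' = j1 then c j0 * cnj (c j1) * of_nat n else 0) else 0)"
      by (intro sum.cong refl) (auto intro!: sum.cong)
    also have "\<dots> = c j0 * cnj (c j1) * of_nat n"
      using fin j0 j1 by simp
    finally show ?thesis .
  qed
  finally have X: "(\<Sum>k<n. g k * cnj (g k) * t k) = c j0 * cnj (c j1) * of_nat n" .
  have "c j0 * cnj (c j1) * of_nat n = 0" using lhs unfolding X .
  then show ?thesis using n by simp
qed



lemma sum_single:
  assumes "finite A" "x \<in> A" "\<forall>y\<in>A. y \<noteq> x \<longrightarrow> f y = (0::complex)"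
  shows "sum f A = f x"
proof -
  have "sum f A = f x + sum f (A - {x})" using assms by (simp add: sum.remove)
  also have "sum f (A - {x}) = 0" using assms by (intro sum.neutral) auto
  finally show ?thesis by simp
qed

lemma main_equiv:
  assumes n: "n \<ge> 2" and Jsub: "J \<subseteq> {..<n}" and Ksub: "K \<subseteq> {..<n}"
    and gen: "generates_Zn n J" and sid: "sidon n J" and ue: "unit_equiv_frames n J K"
  shows "mult_equiv n J K"
proof -
  have n0: "n > 0" using n by simp
  have finJ: "finite J" using Jsub finite_subset by blast
  have finK: "finite K" using Ksub finite_subset by blast
  obtain u \<sigma> where un: "unitary_mat J K u" and bij: "bij_betw \<sigma> {..<n} {..<n}"
    and rep: "\<forall>k<n. \<forall>j\<in>J. omega n ^ (j * k) = (\<Sum>i\<in>K. u j i * omega n ^ (i * \<sigma> k))"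
    using ue unfolding unit_equiv_frames_def harm_vec_def by blast
  have un1: "\<forall>i\<in>K. \<forall>i'\<in>K. (\<Sum>j\<in>J. cnj (u j i) * u j i') = (if i = i' then 1 else 0)"
    and un2: "\<forall>j\<in>J. \<forall>j'\<in>J. (\<Sum>i\<in>K. u j i * cnj (u j' i)) = (if j = j' then 1 else 0)"
    using un unfolding unitary_mat_def by auto
  have inv: "omega n ^ (i * \<sigma> k) = (\<Sum>j\<in>J. cnj (u j i) * omega n ^ (j * k))"
    if i: "i \<in> K" and k: "k < n" for i k
  proof -
    have "(\<Sum>j\<in>J. cnj (u j i) * omega n ^ (j * k))
        = (\<Sum>j\<in>J. cnj (u j i) * (\<Sum>i'\<in>K. u j i' * omega n ^ (i' * \<sigma> k)))"
      using rep k by (intro sum.cong refl) auto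
    also have "\<dots> = (\<Sum>j\<in>J. \<Sum>i'\<in>K. cnj (u j i) * u j i' * omega n ^ (i' * \<sigma> k))"
      by (simp add: sum_distrib_left mult.assoc)
    also have "\<dots> = (\<Sum>i'\<in>K. \<Sum>j\<in>J. cnj (u j i) * u j i' * omega n ^ (i' * \<sigma> k))"
      by (rule sum.swap)
    also have "\<dots> = (\<Sum>i'\<in>K. (\<Sum>j\<in>J. cnj (u j i) * u j i') * omega n ^ (i' * \<sigma> k))"
      by (simp add: sum_distrib_right)
    also have "\<dots> = (\<Sum>i'\<in>K. (if i = i' then 1 else 0) * omega n ^ (i' * \<sigma> k))"
      using un1 i by (intro sum.cong refl) auto
    also have "\<dots> = omega n ^ (i * \<sigma> k)"
      using finK i by (subst sum_single[of K i]) auto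
    finally show ?thesis by simp
  qed
  have pi_ex: "\<exists>j\<in>J. u j i \<noteq> 0 \<and> (\<forall>j'\<in>J. j' \<noteq> j \<longrightarrow> u j' i = 0)" if i: "i \<in> K" for i
  proof -
    have nrm: "\<forall>k<n. norm (\<Sum>j\<in>J. cnj (u j i) * omega n ^ (j * k)) = 1"
    proof (intro allI impI)
      fix k assume k: "k < n"
      show "norm (\<Sum>j\<in>J. cnj (u j i) * omega n ^ (j * k)) = 1"
        unfolding inv[OF i k, symmetric] by (rule omega_norm)
    qed
    have z: "u j0 i = 0 \<or> u j1 i = 0" if "j0 \<in> J" "j1 \<in> J" "j0 \<noteq> j1" for j0 j1
      using fourier[OF n0 finJ Jsub sid nrm that] by simp
    have "\<exists>j\<in>J. u j i \<noteq> 0"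
    proof (rule ccontr)
      assume "\<not> ?thesis"
      then have "(\<Sum>j\<in>J. cnj (u j i) * omega n ^ (j * 0)) = 0" by simp
      then show False using inv[OF i n0] omega_nz[of n 1] by simp
    qed
    then obtain j where "j \<in> J" "u j i \<noteq> 0" by blast
    then show ?thesis using z by blast
  qed
  define a where "a = (\<sigma> 1 + (n - \<sigma> 0)) mod n"
  have s0: "\<sigma> 0 < n" using bij n0 by (auto simp: bij_betw_def)
  have key: "j = (a * i) mod n" if i: "i \<in> K" and j: "j \<in> J" and nz: "u j i \<noteq> 0" for i j
  proof -
    obtain j' where j': "j' \<in> J" "u j' i \<noteq> 0" "\<forall>j''\<in>J. j'' \<noteq> j' \<longrightarrow> u j'' i = 0"
      using pi_ex[OF i] by blast
    have jj: "j = j'" using j' j nz by blast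
    have single: "omega n ^ (i * \<sigma> k) = cnj (u j i) * omega n ^ (j * k)" if k: "k < n" for k
    proof -
      have "omega n ^ (i * \<sigma> k) = (\<Sum>j\<in>J. cnj (u j i) * omega n ^ (j * k))" using inv[OF i k] .
      also have "\<dots> = cnj (u j i) * omega n ^ (j * k)"
        using j' jj finJ j by (intro sum_single) auto
      finally show ?thesis .
    qed
    have "omega n ^ (i * \<sigma> 0) = cnj (u j i)" using single[OF n0] by simp
    moreover have "omega n ^ (i * \<sigma> 1) = cnj (u j i) * omega n ^ j" using single[of 1] n by simp
    ultimately have "omega n ^ (i * \<sigma> 1) = omega n ^ (i * \<sigma> 0 + j)" by (simp add: power_add)
    then have h: "(i * \<sigma> 1) mod n = (i * \<sigma> 0 + j) mod n" using omega_eq_iff[OF n0] by blast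
    have "(i * \<sigma> 1 + i * (n - \<sigma> 0)) mod n = ((i * \<sigma> 1) mod n + i * (n - \<sigma> 0)) mod n"
      by (simp add: mod_add_left_eq)
    also have "\<dots> = ((i * \<sigma> 0 + j) mod n + i * (n - \<sigma> 0)) mod n" using h by simp
    also have "\<dots> = (i * \<sigma> 0 + j + i * (n - \<sigma> 0)) mod n" by (simp add: mod_add_left_eq)
    also have "i * \<sigma> 0 + j + i * (n - \<sigma> 0) = j + n * i"
    proof -
      have "i * (n - \<sigma> 0) = i * n - i * \<sigma> 0" by (simp add: diff_mult_distrib2)
      moreover have "i * \<sigma> 0 \<le> i * n" using s0 by simp
      ultimately show ?thesis by (simp add: mult.commute)
    qed
    also have "(j + n * i) mod n = j" using j Jsub by auto
    finally have A: "(i * \<sigma> 1 + i * (n - \<sigma> 0)) mod n = j" .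
    have "(a * i) mod n = ((\<sigma> 1 + (n - \<sigma> 0)) * i) mod n"
      unfolding a_def by (simp add: mod_mult_left_eq)
    also have "\<dots> = (i * \<sigma> 1 + i * (n - \<sigma> 0)) mod n" by (simp add: algebra_simps)
    finally show ?thesis using A by simp
  qed
  have Jimg: "J = (\<lambda>i. (a * i) mod n) ` K"
  proof
    show "(\<lambda>i. a * i mod n) ` K \<subseteq> J"
    proof
      fix x assume "x \<in> (\<lambda>i. a * i mod n) ` K"
      then obtain i where i: "i \<in> K" "x = a * i mod n" by blast
      obtain j where "j \<in> J" "u j i \<noteq> 0" using pi_ex[OF i(1)] by blast
      then show "x \<in> J" using key[OF i(1)] i(2) by auto
    qed
  next
    show "J \<subseteq> (\<lambda>i. a * i mod n) ` K"
    proof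
      fix j assume j: "j \<in> J"
      have "(\<Sum>i\<in>K. u j i * cnj (u j i)) = 1" using un2 j by simp
      have "\<exists>i\<in>K. u j i \<noteq> 0"
      proof (rule ccontr)
        assume "\<not> ?thesis"
        then have "(\<Sum>i\<in>K. u j i * cnj (u j i)) = 0" by simp
        then show False using \<open>(\<Sum>i\<in>K. u j i * cnj (u j i)) = 1\<close> by simp
      qed
      then obtain i where i: "i \<in> K" "u j i \<noteq> 0" by blast
      then show "j \<in> (\<lambda>i. a * i mod n) ` K" using key[OF i(1) j i(2)] by blast
    qed
  qed
  have cop: "coprime a n"
  proof (rule ccontr)
    assume nc: "\<not> coprime a n"
    define g where "g = gcd a n"
    have g1: "g \<noteq> 1"
    proof
      assume "g = 1"
      then have "coprime a n" unfolding g_def by (rule gcd_eq_1_imp_coprime)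
      then show False using nc by contradiction
    qed
    have gn: "g dvd n" unfolding g_def by (rule gcd_dvd2)
    have ga: "g dvd a" unfolding g_def by (rule gcd_dvd1)
    define H where "H = {x. x < n \<and> g dvd x}"
    have "H = {..<n}"
      using gen unfolding generates_Zn_def
    proof (elim allE impE)
      show "H \<subseteq> {..<n} \<and> 0 \<in> H \<and> (\<forall>x\<in>H. \<forall>y\<in>H. (x + y) mod n \<in> H)
          \<and> (\<forall>x\<in>H. (n - x) mod n \<in> H) \<and> J \<subseteq> H"
      proof (intro conjI ballI)
        show "H \<subseteq> {..<n}" unfolding H_def by auto
        show "0 \<in> H" unfolding H_def using n0 by auto
        fix x y assume "x \<in> H" "y \<in> H"
        then show "(x + y) mod n \<in> H" unfolding H_def using gn n0 by (auto simp: dvd_mod)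
      next
        fix x assume "x \<in> H"
        then show "(n - x) mod n \<in> H" unfolding H_def using gn n0 by (auto simp: dvd_mod dvd_diff_nat)
      next
        show "J \<subseteq> H"
        proof
          fix j assume "j \<in> J"
          then obtain i where "j = a * i mod n" using Jimg by blast
          then show "j \<in> H" unfolding H_def using gn ga n0 by (auto simp: dvd_mod)
        qed
      qed
    qed
    then have "1 \<in> H" using n by auto
    then have "g dvd 1" unfolding H_def by simp
    then show False using g1 by simp
  qed
  obtain b where b: "b < n" "[a * b = Suc 0] (mod n)"
    using cop coprime_iff_invertible'_nat[OF n0] by blast
  have copb: "coprime b n"
  proof -
    have "[b * a = Suc 0] (mod n)" using b(2) by (simp add: mult.commute)
    then show ?thesis using coprime_iff_invertible_nat[of b n] by blast
  qed
  have K_eq: "K = (\<lambda>j. (b * j) mod n) ` J"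
  proof -
    have "(\<lambda>j. (b * j) mod n) ` J = (\<lambda>i. (b * ((a * i) mod n)) mod n) ` K"
      unfolding Jimg image_image ..
    also have "\<dots> = (\<lambda>i. i) ` K"
    proof (rule image_cong[OF refl])
      fix i assume i: "i \<in> K"
      have "(b * ((a * i) mod n)) mod n = (b * (a * i)) mod n" by (simp add: mod_mult_right_eq)
      also have "\<dots> = ((a * b) * i) mod n" by (simp add: mult_ac)
      also have "\<dots> = (((a * b) mod n) * i) mod n" by (simp add: mod_mult_left_eq)
      also have "(a * b) mod n = 1" using b(2) n unfolding cong_def by simp
      also have "(1 * i) mod n = i" using i Ksub by auto
      finally show "(b * ((a * i) mod n)) mod n = i" .
    qed
    finally show ?thesis by simp
  qed
  show ?thesis unfolding mult_equiv_def using b(1) copb K_eq by blast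
qed



definition Pbad :: "nat \<Rightarrow> nat set \<Rightarrow> nat \<Rightarrow> bool" where
  "Pbad n S w \<longleftrightarrow> (\<exists>a\<in>S. \<exists>b\<in>S. \<exists>c\<in>S. w = (a + b + n - c) mod n) \<or> (\<exists>a\<in>S. (2 * w) mod n = (2 * a) mod n)"

lemma solve_mod:
  fixes x y z w n :: nat
  assumes "(x + y) mod n = (z + w) mod n" "z < n" "w < n"
  shows "w = (x + y + n - z) mod n"
proof -
  have "(x + y + (n - z)) mod n = ((x + y) mod n + (n - z)) mod n" by (simp add: mod_add_left_eq)
  also have "\<dots> = ((z + w) mod n + (n - z)) mod n" using assms by simp
  also have "\<dots> = (z + w + (n - z)) mod n" by (simp add: mod_add_left_eq)
  also have "z + w + (n - z) = w + n" using assms by simp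
  also have "(w + n) mod n = w" using assms by simp
  finally show ?thesis using assms by simp
qed

lemma cancel_mod:
  fixes a y z n :: nat
  assumes "(a + y) mod n = (a + z) mod n" "y < n" "z < n"
  shows "y = z"
proof -
  have "[a + y = a + z] (mod n)" using assms(1) unfolding cong_def .
  then have "[y = z] (mod n)" using cong_add_lcancel_nat by blast
  then show ?thesis using cong_less_modulus_unique_nat assms by blast
qed

lemma nonsidon_P:
  assumes sub: "J \<subseteq> {..<n}" and ns: "\<not> sidon n J"
  shows "\<exists>v\<in>J. Pbad n (J - {v}) v"
proof -
  obtain x y z w where xyzw: "x \<in> J" "y \<in> J" "z \<in> J" "w \<in> J"
    and eq: "(x + y) mod n = (z + w) mod n" and n1: "\<not> (x = z \<and> y = w)" and n2: "\<not> (x = w \<and> y = z)"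
    using ns unfolding sidon_def by blast
  have lt: "x < n" "y < n" "z < n" "w < n" using xyzw sub by auto
  show ?thesis
  proof (cases "z = w")
    case False
    have wx: "w \<noteq> x"
    proof
      assume "w = x"
      then have "(x + y) mod n = (x + z) mod n" using eq by (simp add: add.commute)
      then have "y = z" using cancel_mod lt by blast
      then show False using n2 \<open>w = x\<close> by simp
    qed
    have wy: "w \<noteq> y"
    proof
      assume "w = y"
      then have "(y + x) mod n = (y + z) mod n" using eq by (simp add: add.commute)
      then have "x = z" using cancel_mod lt by blast
      then show False using n1 \<open>w = y\<close> by simp
    qed
    have "w = (x + y + n - z) mod n" using solve_mod[OF eq lt(3,4)] .
    note tmp = this
    have "Pbad n (J - {w}) w" unfolding Pbad_def
      by (rule disjI1, rule bexI[of _ x], rule bexI[of _ y], rule bexI[of _ z])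
         (use tmp xyzw wx wy False in auto)
    then show ?thesis using xyzw by blast
  next
    case True
    have xw: "x \<noteq> w"
    proof
      assume "x = w"
      then have "(w + y) mod n = (w + w) mod n" using eq True by simp
      then have "y = w" using cancel_mod lt by blast
      then show False using n1 \<open>x = w\<close> True by simp
    qed
    show ?thesis
    proof (cases "x = y")
      case False
      have "(y + x) mod n = (z + z) mod n" using eq True by (simp add: add.commute)
      then have "x = (z + z + n - y) mod n" using solve_mod[of z z n y x] lt
        by (simp add: add.commute)
      note tmp = this
      have "Pbad n (J - {x}) x" unfolding Pbad_def
        by (rule disjI1, rule bexI[of _ z], rule bexI[of _ z], rule bexI[of _ y])
           (use tmp xyzw xw True False in auto)
      then show ?thesis using xyzw by blast
    next
      case xy: True
      have "(2 * x) mod n = (2 * z) mod n" using eq True xy by (simp add: mult_2)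
      note tmp = this
      have "Pbad n (J - {x}) x" unfolding Pbad_def
        by (rule disjI2, rule bexI[of _ z]) (use tmp xyzw xw True in auto)
      then show ?thesis using xyzw by blast
    qed
  qed
qed

lemma two_sol: "card {w::nat. w < n \<and> (2 * w) mod n = (2 * a) mod n} \<le> 2"
proof (cases "{w. w < n \<and> (2 * w) mod n = (2 * a) mod n} = {}")
  case True show ?thesis unfolding True by simp
next
  case False
  define T where "T = {w. w < n \<and> (2 * w) mod n = (2 * a) mod n}"
  have finT: "finite T" unfolding T_def by simp
  define m where "m = Min T"
  have mT: "m \<in> T" using False finT unfolding m_def T_def by (intro Min_in) auto
  have "T \<subseteq> {m, (2 * m + n) div 2}"
  proof
    fix w assume wT: "w \<in> T"
    have "m \<le> w" using wT finT unfolding m_def by simp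
    show "w \<in> {m, (2 * m + n) div 2}"
    proof (cases "w = m")
      case True show ?thesis unfolding True by simp
    next
      case False
      with \<open>m \<le> w\<close> have mw: "m < w" by simp
      have "(2 * w) mod n = (2 * m) mod n" using wT mT unfolding T_def by simp
      then have "n dvd 2 * w - 2 * m" using mw by (subst (asm) mod_eq_dvd_iff_nat) auto
      then obtain t where t: "2 * w - 2 * m = n * t" by blast
      have "w < n" using wT unfolding T_def by simp
      then have "2 * w - 2 * m < 2 * n" by simp
      then have "n * t < n * 2" using t by (simp add: mult.commute)
      then have "t < 2" by simp
      moreover have "t \<noteq> 0"
      proof
        assume "t = 0"
        with t have "2 * w - 2 * m = 0" by simp
        with mw show False by simp
      qed
      ultimately have "t = 1" by simp
      then have e: "2 * w = 2 * m + n" using t mw by simp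
      have h: "w = (2 * m + n) div 2" unfolding e[symmetric] by simp
      show ?thesis using h by blast
    qed
  qed
  then have "card T \<le> card {m, (2 * m + n) div 2}" by (intro card_mono) auto
  also have "\<dots> \<le> 2" by (simp add: card_insert_if)
  finally show ?thesis unfolding T_def .
qed

lemma countP:
  assumes "finite S"
  shows "card {w. w < n \<and> Pbad n S w} \<le> card S ^ 3 + 2 * card S"
proof -
  define A where "A = (\<lambda>(a, b, c). (a + b + n - c) mod n) ` (S \<times> S \<times> S)"
  define B where "B = (\<Union>a\<in>S. {w. w < n \<and> (2 * w) mod n = (2 * a) mod n})"
  have "{w. w < n \<and> Pbad n S w} \<subseteq> A \<union> B"
    unfolding Pbad_def A_def B_def by force
  then have "card {w. w < n \<and> Pbad n S w} \<le> card (A \<union> B)"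
    using assms unfolding A_def B_def by (intro card_mono) auto
  also have "\<dots> \<le> card A + card B" by (rule card_Un_le)
  also have "card A \<le> card (S \<times> S \<times> S)" unfolding A_def by (rule card_image_le) (simp add: assms)
  also have "card (S \<times> S \<times> S) = card S ^ 3" by (simp add: card_cartesian_product power3_eq_cube)
  also have "card B \<le> (\<Sum>a\<in>S. card {w. w < n \<and> (2 * w) mod n = (2 * a) mod n})"
    unfolding B_def using assms by (rule card_UN_le)
  also have "\<dots> \<le> of_nat (card S) * 2" by (rule sum_bounded_above) (rule two_sol)
  finally show ?thesis by simp
qed

lemma count_bad:
  assumes d: "d \<ge> 1"
  shows "card {J. J \<subseteq> {..<n} \<and> card J = d \<and> (\<exists>w\<in>J. Pbad n (J - {w}) w)}
     \<le> ((d - 1) ^ 3 + 2 * (d - 1)) * (n choose (d - 1))"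
proof -
  define m where "m = (d - 1) ^ 3 + 2 * (d - 1)"
  define SS where "SS = {S. S \<subseteq> {..<n} \<and> card S = d - 1}"
  define Sig where "Sig = (SIGMA S:SS. {w. w < n \<and> Pbad n S w})"
  have finSS: "finite SS" unfolding SS_def by (rule finite_subset[of _ "Pow {..<n}"]) auto
  have finSig: "finite Sig" unfolding Sig_def using finSS by (intro finite_SigmaI) auto
  have "{J. J \<subseteq> {..<n} \<and> card J = d \<and> (\<exists>w\<in>J. Pbad n (J - {w}) w)} \<subseteq> (\<lambda>(S, w). insert w S) ` Sig"
  proof
    fix J assume "J \<in> {J. J \<subseteq> {..<n} \<and> card J = d \<and> (\<exists>w\<in>J. Pbad n (J - {w}) w)}"
    then obtain w where J: "J \<subseteq> {..<n}" "card J = d" "w \<in> J" "Pbad n (J - {w}) w" by blast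
    have finJ: "finite J" using J(1) finite_subset by blast
    have c: "card (J - {w}) = d - 1" using J finJ by (simp add: card_Diff_singleton)
    have w: "w < n" using J by auto
    have "(J - {w}, w) \<in> Sig" unfolding Sig_def SS_def using J(1,4) c w by blast
    moreover have "J = insert w (J - {w})" using J by auto
    ultimately show "J \<in> (\<lambda>(S, w). insert w S) ` Sig"
      by (intro image_eqI[where x="(J - {w}, w)"]) simp_all
  qed
  then have "card {J. J \<subseteq> {..<n} \<and> card J = d \<and> (\<exists>w\<in>J. Pbad n (J - {w}) w)} \<le> card ((\<lambda>(S, w). insert w S) ` Sig)"
    using finSig by (intro card_mono) auto
  also have "\<dots> \<le> card Sig" using finSig by (rule card_image_le)
  also have "card Sig = (\<Sum>S\<in>SS. card {w. w < n \<and> Pbad n S w})"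
    unfolding Sig_def using finSS by (intro card_SigmaI) auto
  also have "\<dots> \<le> of_nat (card SS) * m"
  proof (rule sum_bounded_above)
    fix S assume "S \<in> SS"
    then have S: "finite S" "card S = d - 1" unfolding SS_def using finite_subset by auto
    show "card {w. w < n \<and> Pbad n S w} \<le> m" using countP[OF S(1), of n] S(2) unfolding m_def by simp
  qed
  also have "card SS = n choose (d - 1)" unfolding SS_def using n_subsets[of "{..<n}" "d - 1"] by simp
  finally show ?thesis unfolding m_def by (simp add: mult.commute)
qed



theorem proposition4p5:
  fixes d :: nat
  assumes "d \<ge> 1"
  shows "\<exists>C::real. \<forall>n::nat.
           real (card {J. J \<subseteq> {..<n} \<and> card J = d \<and> generates_Zn n J \<and> exceptional n d J})
             \<le> C * real n ^ (d - 1)"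
proof -
  define m where "m = (d - 1) ^ 3 + 2 * (d - 1)"
  have bound: "card {J. J \<subseteq> {..<n} \<and> card J = d \<and> generates_Zn n J \<and> exceptional n d J}
      \<le> (m + 2) * n ^ (d - 1)" for n
  proof -
    define T where "T = {J. J \<subseteq> {..<n} \<and> card J = d \<and> generates_Zn n J \<and> exceptional n d J}"
    have finT: "finite T" unfolding T_def by (rule finite_subset[of _ "Pow {..<n}"]) auto
    show ?thesis unfolding T_def[symmetric]
    proof (cases "n \<ge> 2")
      case n2: True
      define Bad where "Bad = {J. J \<subseteq> {..<n} \<and> card J = d \<and> (\<exists>w\<in>J. Pbad n (J - {w}) w)}"
      have finB: "finite Bad" unfolding Bad_def by (rule finite_subset[of _ "Pow {..<n}"]) auto
      have "T \<subseteq> Bad"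
      proof
        fix J assume "J \<in> T"
        then have J: "J \<subseteq> {..<n}" "card J = d" "generates_Zn n J" "exceptional n d J"
          unfolding T_def by auto
        have "\<not> sidon n J"
        proof
          assume sid: "sidon n J"
          obtain K where K: "K \<subseteq> {..<n}" "\<not> mult_equiv n J K" "unit_equiv_frames n J K"
            using J(4) unfolding exceptional_def by blast
          show False using main_equiv[OF n2 J(1) K(1) J(3) sid K(3)] K(2) by contradiction
        qed
        then show "J \<in> Bad" using nonsidon_P[OF J(1)] J unfolding Bad_def by blast
      qed
      then have "card T \<le> card Bad" using finB by (rule card_mono[rotated])
      also have "\<dots> \<le> m * (n choose (d - 1))" unfolding Bad_def m_def by (rule count_bad[OF assms])
      also have "n choose (d - 1) \<le> n ^ (d - 1)"
      proof (cases "d - 1 \<le> n")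
        case True then show ?thesis by (rule binomial_le_pow)
      next
        case False then have z: "n choose (d - 1) = 0" by (intro binomial_eq_0) simp
        show ?thesis by (subst z) (rule zero_le)
      qed
      then have "m * (n choose (d - 1)) \<le> m * n ^ (d - 1)" by (rule mult_le_mono2)
      also have "\<dots> \<le> (m + 2) * n ^ (d - 1)" by (rule mult_le_mono1) simp
      finally show "card T \<le> (m + 2) * n ^ (d - 1)" .
    next
      case False
      then have "n = 0 \<or> n = 1" by auto
      then show "card T \<le> (m + 2) * n ^ (d - 1)"
      proof
        assume "n = 0"
        then have "T = {}" unfolding T_def using assms by auto
        then show ?thesis by simp
      next
        assume n1: "n = 1"
        have "card T \<le> card (Pow {..<n})" using finT
          by (intro card_mono) (auto simp: T_def)
        also have "\<dots> = 2" using n1 by (simp add: card_Pow)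
        also have "\<dots> \<le> (m + 2) * n ^ (d - 1)" using n1 by simp
        finally show ?thesis .
      qed
    qed
  qed
  show ?thesis
  proof (rule exI[of _ "real (m + 2)"], intro allI)
    fix n :: nat
    have "real (card {J. J \<subseteq> {..<n} \<and> card J = d \<and> generates_Zn n J \<and> exceptional n d J})
        \<le> real ((m + 2) * n ^ (d - 1))" using bound[of n] by (rule of_nat_mono)
    also have "\<dots> = real (m + 2) * real n ^ (d - 1)" by (simp only: of_nat_mult of_nat_power)
    finally show "real (card {J. J \<subseteq> {..<n} \<and> card J = d \<and> generates_Zn n J \<and> exceptional n d J})
        \<le> real (m + 2) * real n ^ (d - 1)" .
  qed
qed


end
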